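(* Let $\mathcal{A}$ be a Banach algebra such that $\mathrm{rad}(\mathcal{A})=\mathrm{rann}(\mathcal{A})$ and $\mathcal{A}/\mathrm{rad}(\mathcal{A})$ is commutative. Let $T$ be a left multiplier of $\mathcal{A}$. Then $T(\mathcal{A})\subseteq\mathrm{rad}(\mathcal{A})$ if and only if $T$ is spectrally infinitesimal.
   Context: $\mathrm{rad}(\mathcal{A})$ is the Jacobson radical and $\mathrm{rann}(\mathcal{A})=\{c\in\mathcal{A}: ac=0\ \forall a\in\mathcal{A}\}$. A left multiplier is a linear map $T:\mathcal{A}\to\mathcal{A}$ with $T(ab)=T(a)b$ for all $a,b$. $T$ is spectrally infinitesimal if $r(T(a))=0$ for all $a\in\mathcal{A}$, $r$ the spectral radius. *)

theory Defs
  imports "HOL-Analysis.Analysis"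
begin

text \<open>A complex Banach algebra (not necessarily unital, not necessarily commutative) is
modelled as a type of class real_normed_algebra and banach (complete, submultiplicative
norm, associative multiplication without assumed unit) together with a complex scalar
multiplication sc extending the real one and compatible with the algebra structure and
the norm.\<close>

definition complex_banach_algebra ::
  "(complex \<Rightarrow> 'a::{real_normed_algebra,banach} \<Rightarrow> 'a) \<Rightarrow> bool" where
  "complex_banach_algebra sc \<longleftrightarrow>
     (\<forall>r x. sc (complex_of_real r) x = r *\<^sub>R x) \<and>
     (\<forall>c x y. sc c (x + y) = sc c x + sc c y) \<and>
     (\<forall>c d x. sc (c + d) x = sc c x + sc d x) \<and>
     (\<forall>c d x. sc c (sc d x) = sc (c * d) x) \<and>
     (\<forall>c x y. sc c (x * y) = sc c x * y \<and> sc c (x * y) = x * sc c y) \<and>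
     (\<forall>c x. norm (sc c x) = cmod c * norm x)"

text \<open>Quasi-invertibility (x is quasi-invertible iff 1 - x is invertible in the unitization).\<close>

definition left_quasi_invertible :: "'a::ring \<Rightarrow> bool" where
  "left_quasi_invertible x \<longleftrightarrow> (\<exists>y. y + x - y * x = 0)"

definition quasi_invertible :: "'a::ring \<Rightarrow> bool" where
  "quasi_invertible x \<longleftrightarrow> (\<exists>y. x + y - x * y = 0 \<and> x + y - y * x = 0)"

text \<open>Spectrum of a, computed in the unitization A# (so 0 always belongs to it):
for nonzero lambda, lambda - a is invertible in A# iff a/lambda is quasi-invertible.\<close>

definition alg_spectrum :: "(complex \<Rightarrow> 'a::{real_normed_algebra,banach} \<Rightarrow> 'a) \<Rightarrow> 'a \<Rightarrow> complex set" where
  "alg_spectrum sc a = insert 0 {z. z \<noteq> 0 \<and> \<not> quasi_invertible (sc (1 / z) a)}"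

definition spectral_radius :: "(complex \<Rightarrow> 'a::{real_normed_algebra,banach} \<Rightarrow> 'a) \<Rightarrow> 'a \<Rightarrow> real" where
  "spectral_radius sc a = Sup (cmod ` alg_spectrum sc a)"

text \<open>Jacobson radical: a is in rad(A) iff b a is left quasi-invertible for every b in the
unitization A#, i.e. for every b = lambda 1 + c.\<close>

definition jacobson_radical :: "(complex \<Rightarrow> 'a::{real_normed_algebra,banach} \<Rightarrow> 'a) \<Rightarrow> 'a set" where
  "jacobson_radical sc = {a. \<forall>z c. left_quasi_invertible (sc z a + c * a)}"

definition right_annihilator :: "'a::ring set" where
  "right_annihilator = {c. \<forall>a. a * c = 0}"

definition left_multiplier :: "(complex \<Rightarrow> 'a::{real_normed_algebra,banach} \<Rightarrow> 'a) \<Rightarrow> ('a \<Rightarrow> 'a) \<Rightarrow> bool" where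
  "left_multiplier sc T \<longleftrightarrow>
     (\<forall>x y. T (x + y) = T x + T y) \<and> (\<forall>c x. T (sc c x) = sc c (T x)) \<and>
     (\<forall>a b. T (a * b) = T a * b)"

definition spectrally_infinitesimal :: "(complex \<Rightarrow> 'a::{real_normed_algebra,banach} \<Rightarrow> 'a) \<Rightarrow> ('a \<Rightarrow> 'a) \<Rightarrow> bool" where
  "spectrally_infinitesimal sc T \<longleftrightarrow> (\<forall>a. spectral_radius sc (T a) = 0)"

end

theory Submission
  imports Defs
begin

primrec pw :: "'a::real_normed_algebra \<Rightarrow> nat \<Rightarrow> 'a" where
  "pw u 0 = u"
| "pw u (Suc n) = u * pw u n"

lemma pw_right: "pw u (Suc n) = pw u n * u"
  by (induction n) (simp_all add: mult.assoc[symmetric])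

lemma pw_norm: "norm (pw u n) \<le> norm u ^ Suc n"
proof (induction n)
  case 0 then show ?case by simp
next
  case (Suc n)
  have "norm (pw u (Suc n)) \<le> norm u * norm (pw u n)" by (simp add: norm_mult_ineq)
  also have "\<dots> \<le> norm u * norm u ^ Suc n" using Suc by (simp add: mult_left_mono)
  finally show ?case by simp
qed

lemma neumann_qi:
  fixes u :: "'a::{real_normed_algebra,banach}"
  assumes "norm u < 1"
  shows "quasi_invertible u"
proof -
  have sg: "summable (\<lambda>n. norm u ^ Suc n)"
    using assms by (simp add: summable_geometric summable_mult)
  have s: "summable (pw u)"
    by (rule summable_comparison_test'[OF sg]) (use pw_norm in auto)
  define S where "S = suminf (pw u)"
  have h: "(\<Sum>n. pw u (Suc n)) = S - u" using suminf_split_head[OF s] by (simp add: S_def)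
  have l: "u * S = S - u"
    using suminf_mult[OF s, of u] h by (simp add: S_def)
  have r: "S * u = S - u"
  proof -
    have "(\<lambda>n. pw u n * u) = (\<lambda>n. pw u (Suc n))" by (simp only: pw_right)
    then show ?thesis using suminf_mult2[OF s, of u] h by (simp add: S_def)
  qed
  show ?thesis unfolding quasi_invertible_def
    by (rule exI[of _ "- S"]) (simp add: l r)
qed

theorem theorem5p6:
  fixes sc :: "complex \<Rightarrow> 'a::{real_normed_algebra,banach} \<Rightarrow> 'a"
    and T :: "'a \<Rightarrow> 'a"
  assumes "complex_banach_algebra sc"
    and "jacobson_radical sc = right_annihilator"
    and "\<forall>a b. a * b - b * a \<in> jacobson_radical sc"
    and "left_multiplier sc T"
  shows "T ` UNIV \<subseteq> jacobson_radical sc \<longleftrightarrow> spectrally_infinitesimal sc T"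
proof -
  note cb = assms(1)[unfolded complex_banach_algebra_def]
  have scadd: "sc c (x + y) = sc c x + sc c y" for c x y using cb by blast
  have scmul: "sc c (x * y) = sc c x * y" "sc c (x * y) = x * sc c y" for c x y using cb by blast+
  have scnorm: "norm (sc c x) = cmod c * norm x" for c x using cb by blast
  have sc1: "sc 1 x = x" for x using cb by (metis of_real_1 scaleR_one)
  have sc0: "sc c 0 = 0" for c using scadd[of c 0 0] by simp
  have scminus: "sc c (- x) = - sc c x" for c x using scadd[of c x "- x"] sc0[of c]
    by (simp add: eq_neg_iff_add_eq_0 add.commute)
  have scdiff: "sc c (x - y) = sc c x - sc c y" for c x y
    using scadd[of c x "- y"] scminus[of c y] by simp
  note lm = assms(4)[unfolded left_multiplier_def]
  show ?thesis
  proof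
    assume H: "T ` UNIV \<subseteq> jacobson_radical sc"
    show "spectrally_infinitesimal sc T" unfolding spectrally_infinitesimal_def
    proof
      fix a
      have x: "\<forall>b. b * T a = 0" using H assms(2) by (auto simp: right_annihilator_def)
      have "alg_spectrum sc (T a) = {0}"
      proof -
        have "quasi_invertible (sc w (T a))" for w
        proof -
          have "b * sc w (T a) = 0" for b using x scmul(2)[of w b "T a"] sc0 by simp
          then show ?thesis unfolding quasi_invertible_def
            by (intro exI[of _ "- sc w (T a)"]) simp
        qed
        then show ?thesis unfolding alg_spectrum_def by auto
      qed
      then show "spectral_radius sc (T a) = 0" by (simp add: spectral_radius_def)
    qed
  next
    assume H: "spectrally_infinitesimal sc T"
    have qi: "quasi_invertible (T w)" for w
    proof -
      let ?v = "T w"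
      have bd: "alg_spectrum sc ?v \<subseteq> cball 0 (norm ?v)"
      proof
        fix z assume z: "z \<in> alg_spectrum sc ?v"
        show "z \<in> cball 0 (norm ?v)"
        proof (rule ccontr)
          assume "z \<notin> cball 0 (norm ?v)"
          then have zz: "cmod z > norm ?v" by simp
          then have "z \<noteq> 0" by auto
          have "norm (sc (1/z) ?v) = norm ?v / cmod z"
            by (simp add: scnorm norm_divide)
          also have "\<dots> < 1" using zz by (simp add: divide_less_eq)
          finally have "quasi_invertible (sc (1/z) ?v)" by (rule neumann_qi)
          with z \<open>z \<noteq> 0\<close> show False by (simp add: alg_spectrum_def)
        qed
      qed
      have bdd: "bdd_above (cmod ` alg_spectrum sc ?v)"
        using bd by (auto intro!: bdd_aboveI[of _ "norm ?v"])
      show ?thesis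
      proof (rule ccontr)
        assume "\<not> quasi_invertible ?v"
        then have "1 \<in> alg_spectrum sc ?v" by (simp add: alg_spectrum_def sc1)
        then have "cmod 1 \<le> Sup (cmod ` alg_spectrum sc ?v)"
          by (intro cSup_upper bdd imageI)
        with H show False by (simp add: spectrally_infinitesimal_def spectral_radius_def)
      qed
    qed
    show "T ` UNIV \<subseteq> jacobson_radical sc"
    proof
      fix x assume "x \<in> T ` UNIV"
      then obtain a where xa: "x = T a" by auto
      show "x \<in> jacobson_radical sc" unfolding jacobson_radical_def
      proof (intro CollectI allI)
        fix z c
        define L where "L p = sc z p + c * p" for p
        define v where "v = sc z x + x * c"
        have Tw: "T (sc z a + a * c) = v" using lm xa by (simp add: v_def)
        obtain y where y: "v + y - v * y = 0" "v + y - y * v = 0"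
          using qi[of "sc z a + a * c"] unfolding Tw quasi_invertible_def by blast
        have Lm: "L p * q = L (p * q)" for p q
          by (simp add: L_def scmul distrib_right mult.assoc)
        have xL: "p * L q = (sc z p + p * c) * q" for p q
          using scmul(1)[of z p q] scmul(2)[of z p q]
          by (simp add: L_def distrib_right distrib_left mult.assoc)
        have Ldiff: "L (p - q) = L p - L q" for p q
          by (simp add: L_def scdiff algebra_simps)
        have xLx: "x * L x = v * x" using xL[of x x] by (simp add: v_def)
        have yv: "y * v - v = y" using y(2) by (simp add: algebra_simps)
        have e1: "L (y * x) * L x = L (y * v * x)"
          by (simp add: Lm mult.assoc xLx)
        have e2: "L x * L x = L (v * x)" by (simp add: Lm xLx)
        have "L (y * x) * L x - L x * L x = L (y * x)"
          using e1 e2 Ldiff[of "y * v * x" "v * x"] yv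
          by (metis left_diff_distrib)
        then have key: "(- L x + L (y * x)) + L x - (- L x + L (y * x)) * L x = 0"
          by (simp add: algebra_simps)
        show "left_quasi_invertible (sc z x + c * x)"
          unfolding left_quasi_invertible_def
          using key by (intro exI[of _ "- L x + L (y * x)"]) (simp add: L_def)
      qed
    qed
  qed
qed

end
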